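(* Let $F$ be a free group of rank greater than one. Let $H$ be a finitely generated subgroup of infinite index in $F$ and let $\{\gamma_1,\ldots,\gamma_n\}$ be a finite subset of $F\smallsetminus H$. Then there exist an integer $k$ and a surjective homomorphism $f\colon F\to A_k$ onto the alternating group $A_k$ such that $f(\gamma_i)\notin f(H)$ for all $i=1,\ldots,n$. *)

theory Defs
  imports "HOL-Algebra.Algebra"
begin

definition word_eval :: "('a, 'b) monoid_scheme \<Rightarrow> ('a \<times> bool) list \<Rightarrow> 'a" where
  "word_eval G w = foldr (\<lambda>(x, b) acc. (if b then inv\<^bsub>G\<^esub> x else x) \<otimes>\<^bsub>G\<^esub> acc) w \<one>\<^bsub>G\<^esub>"

definition reduced_word :: "('a \<times> bool) list \<Rightarrow> bool" where
  "reduced_word w = (\<forall>i. Suc i < length w \<longrightarrow>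
      \<not> (fst (w ! i) = fst (w ! Suc i) \<and> snd (w ! i) \<noteq> snd (w ! Suc i)))"

definition free_basis :: "('a, 'b) monoid_scheme \<Rightarrow> 'a set \<Rightarrow> bool" where
  "free_basis G B = (B \<subseteq> carrier G \<and> generate G B = carrier G \<and>
     (\<forall>w. w \<noteq> ([] :: (_ \<times> bool) list) \<and> set (map fst w) \<subseteq> B \<and> reduced_word w \<longrightarrow> word_eval G w \<noteq> \<one>\<^bsub>G\<^esub>))"

end

theory Submission
  imports Defs
begin

definition mapw :: "('a \<Rightarrow> 'c) \<Rightarrow> ('a \<times> bool) list \<Rightarrow> ('c \<times> bool) list" where
  "mapw \<phi> w = map (\<lambda>(x, b). (\<phi> x, b)) w"

definition invw :: "('a \<times> bool) list \<Rightarrow> ('a \<times> bool) list" where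
  "invw w = rev (map (\<lambda>(x, b). (x, \<not> b)) w)"

lemma word_eval_Nil [simp]: "word_eval G [] = \<one>\<^bsub>G\<^esub>"
  by (simp add: word_eval_def)

lemma word_eval_Cons [simp]:
  "word_eval G ((x, b) # w) = (if b then inv\<^bsub>G\<^esub> x else x) \<otimes>\<^bsub>G\<^esub> word_eval G w"
  by (simp add: word_eval_def)

lemma mapw_simps [simp]: "mapw \<phi> [] = []" "mapw \<phi> ((x, b) # w) = (\<phi> x, b) # mapw \<phi> w"
  "mapw \<phi> (u @ v) = mapw \<phi> u @ mapw \<phi> v"
  by (auto simp: mapw_def)

lemma set_mapw: "set (map fst (mapw \<phi> w)) = \<phi> ` set (map fst w)"
  by (induct w) (auto simp: mapw_def)

lemma mapw_carrier: "\<phi> ` B \<subseteq> C \<Longrightarrow> set (map fst w) \<subseteq> B \<Longrightarrow> set (map fst (mapw \<phi> w)) \<subseteq> C"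
  by (induct w) (auto simp: mapw_def)

lemma set_mapw' [simp]: "fst ` set (mapw \<phi> w) = \<phi> ` fst ` set w"
  by (induct w) (auto simp: mapw_def)

lemma (in group) word_eval_carrier:
  "set (map fst w) \<subseteq> carrier G \<Longrightarrow> word_eval G w \<in> carrier G"
proof (induct w)
  case (Cons a w) thus ?case by (cases a) auto
qed simp

lemma (in group) word_eval_append:
  "set (map fst u) \<subseteq> carrier G \<Longrightarrow> set (map fst v) \<subseteq> carrier G \<Longrightarrow>
   word_eval G (u @ v) = word_eval G u \<otimes> word_eval G v"
proof (induct u)
  case (Cons a u)
  obtain x b where a: "a = (x, b)" by (cases a)
  show ?case using Cons a by (auto simp: m_assoc word_eval_carrier)
qed (simp add: word_eval_carrier)

lemma (in group) word_eval_cancel: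
  assumes "x \<in> carrier G" "set (map fst v) \<subseteq> carrier G"
  shows "word_eval G ((x, b) # (x, \<not> b) # v) = word_eval G v"
  using assms by (cases b) (auto simp: m_assoc[symmetric] word_eval_carrier)

lemma (in group) word_eval_invw:
  "set (map fst w) \<subseteq> carrier G \<Longrightarrow> word_eval G (invw w) = inv (word_eval G w)"
proof (induct w)
  case Nil thus ?case by (simp add: invw_def)
next
  case (Cons a w)
  obtain x b where a: "a = (x, b)" by (cases a)
  have x: "x \<in> carrier G" and w: "set (map fst w) \<subseteq> carrier G" using Cons a by auto
  have sw: "set (map fst (invw w)) \<subseteq> carrier G" using w by (auto simp: invw_def)
  have "invw (a # w) = invw w @ [(x, \<not> b)]" by (simp add: invw_def a)
  hence "word_eval G (invw (a # w)) = word_eval G (invw w) \<otimes> word_eval G [(x, \<not> b)]"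
    using word_eval_append[OF sw] x by simp
  thus ?case using Cons a x w by (cases b) (auto simp: inv_mult_group word_eval_carrier)
qed

lemma set_invw [simp]: "fst ` set (invw w) = fst ` set w"
  by (induct w) (auto simp: invw_def)

lemma mapw_invw: "mapw \<phi> (invw w) = invw (mapw \<phi> w)"
  by (induct w) (auto simp: invw_def mapw_def)

lemma (in group) generate_words:
  assumes "g \<in> generate G B" "B \<subseteq> carrier G"
  shows "\<exists>w. set (map fst w) \<subseteq> B \<and> word_eval G w = g"
  using assms(1)
proof induct
  case one show ?case by (intro exI[of _ "[]"]) simp
next
  case (incl h) show ?case using incl assms(2)
    by (intro exI[of _ "[(h, False)]"]) auto
next
  case (inv h) show ?case using inv assms(2)
    by (intro exI[of _ "[(h, True)]"]) auto
next
  case (eng h1 h2)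
  then obtain w1 w2 where "set (map fst w1) \<subseteq> B" "word_eval G w1 = h1"
    "set (map fst w2) \<subseteq> B" "word_eval G w2 = h2" by blast
  thus ?case using assms(2) by (intro exI[of _ "w1 @ w2"]) (auto simp: word_eval_append)
qed

lemma free_kill:
  assumes F: "group F" and K: "group K" and fb: "free_basis F B"
    and phi: "\<phi> ` B \<subseteq> carrier K"
  shows "set (map fst w) \<subseteq> B \<Longrightarrow> word_eval F w = \<one>\<^bsub>F\<^esub> \<Longrightarrow> word_eval K (mapw \<phi> w) = \<one>\<^bsub>K\<^esub>"
proof (induct "length w" arbitrary: w rule: less_induct)
  case less
  interpret F: group F by fact
  interpret K: group K by fact
  have BF: "B \<subseteq> carrier F" using fb by (simp add: free_basis_def)
  show ?case
  proof (cases "w = []")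
    case True thus ?thesis by simp
  next
    case False
    have "\<not> reduced_word w" using fb less(2,3) False by (auto simp: free_basis_def)
    then obtain i where i: "Suc i < length w" "fst (w ! i) = fst (w ! Suc i)"
      "snd (w ! i) \<noteq> snd (w ! Suc i)" by (auto simp: reduced_word_def)
    obtain x b where xb: "w ! i = (x, b)" by (cases "w ! i")
    have wi1: "w ! Suc i = (x, \<not> b)" using i xb by (cases "w ! Suc i") auto
    define u where "u = take i w"
    define v where "v = drop (Suc (Suc i)) w"
    have wdec: "w = u @ (x, b) # (x, \<not> b) # v"
      unfolding u_def v_def using i xb wi1
      by (metis Cons_nth_drop_Suc Suc_lessD append_take_drop_id)
    have sets: "set (map fst u) \<subseteq> B" "x \<in> B" "set (map fst v) \<subseteq> B"
      using less(2) wdec by auto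
    have "length (u @ v) < length w" using wdec by simp
    moreover have "set (map fst (u @ v)) \<subseteq> B" using sets by auto
    moreover have "word_eval F (u @ v) = \<one>\<^bsub>F\<^esub>"
    proof -
      have "word_eval F w = word_eval F u \<otimes>\<^bsub>F\<^esub> word_eval F ((x, b) # (x, \<not> b) # v)"
        unfolding wdec using sets BF by (intro F.word_eval_append) auto
      also have "\<dots> = word_eval F u \<otimes>\<^bsub>F\<^esub> word_eval F v"
        using sets BF by (subst F.word_eval_cancel) auto
      also have "\<dots> = word_eval F (u @ v)" using sets BF by (subst F.word_eval_append) auto
      finally show ?thesis using less(3) by simp
    qed
    ultimately have IH: "word_eval K (mapw \<phi> (u @ v)) = \<one>\<^bsub>K\<^esub>" using less(1) by blast
    have sK: "set (map fst (mapw \<phi> u)) \<subseteq> carrier K" "\<phi> x \<in> carrier K"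
      "set (map fst (mapw \<phi> v)) \<subseteq> carrier K"
      using sets phi mapw_carrier[OF phi] by auto
    have "word_eval K (mapw \<phi> w) = word_eval K (mapw \<phi> u @ (\<phi> x, b) # (\<phi> x, \<not> b) # mapw \<phi> v)"
      unfolding wdec by simp
    also have "\<dots> = word_eval K (mapw \<phi> u) \<otimes>\<^bsub>K\<^esub> word_eval K ((\<phi> x, b) # (\<phi> x, \<not> b) # mapw \<phi> v)"
      using sK by (intro K.word_eval_append) auto
    also have "\<dots> = word_eval K (mapw \<phi> u) \<otimes>\<^bsub>K\<^esub> word_eval K (mapw \<phi> v)"
      using sK by (subst K.word_eval_cancel) auto
    also have "\<dots> = word_eval K (mapw \<phi> (u @ v))" using sK by (simp add: K.word_eval_append)
    finally show ?thesis using IH by simp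
  qed
qed

lemma free_welldef:
  assumes F: "group F" and K: "group K" and fb: "free_basis F B"
    and phi: "\<phi> ` B \<subseteq> carrier K"
    and u: "set (map fst u) \<subseteq> B" and v: "set (map fst v) \<subseteq> B"
    and eq: "word_eval F u = word_eval F v"
  shows "word_eval K (mapw \<phi> u) = word_eval K (mapw \<phi> v)"
proof -
  interpret F: group F by fact
  interpret K: group K by fact
  have BF: "B \<subseteq> carrier F" using fb by (simp add: free_basis_def)
  have uF: "set (map fst u) \<subseteq> carrier F" and vF: "set (map fst v) \<subseteq> carrier F"
    using u v BF by auto
  have ivF: "set (map fst (invw v)) \<subseteq> carrier F" using vF by (auto simp: invw_def)
  have "word_eval F (u @ invw v) = \<one>\<^bsub>F\<^esub>"
    using uF vF ivF eq by (simp add: F.word_eval_append F.word_eval_invw F.word_eval_carrier)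
  moreover have "set (map fst (u @ invw v)) \<subseteq> B" using u v by (auto simp: invw_def)
  ultimately have 1: "word_eval K (mapw \<phi> (u @ invw v)) = \<one>\<^bsub>K\<^esub>"
    using free_kill[OF F K fb phi] by blast
  have uK: "set (map fst (mapw \<phi> u)) \<subseteq> carrier K" and vK: "set (map fst (mapw \<phi> v)) \<subseteq> carrier K"
    using u v mapw_carrier[OF phi] by auto
  have ivK: "set (map fst (invw (mapw \<phi> v))) \<subseteq> carrier K" using vK by simp
  have "word_eval K (mapw \<phi> u) \<otimes>\<^bsub>K\<^esub> inv\<^bsub>K\<^esub> word_eval K (mapw \<phi> v) = \<one>\<^bsub>K\<^esub>"
    using 1 uK vK ivK by (simp add: mapw_invw K.word_eval_append K.word_eval_invw)
  moreover have a: "word_eval K (mapw \<phi> u) \<in> carrier K" and b: "word_eval K (mapw \<phi> v) \<in> carrier K"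
    using uK vK K.word_eval_carrier by auto
  ultimately show ?thesis
    by (metis K.inv_closed K.inv_inv K.inv_unique' K.l_inv K.m_assoc K.r_one K.l_one)
qed

definition ext_hom where
  "ext_hom F B K \<phi> g = word_eval K (mapw \<phi> (SOME w. set (map fst w) \<subseteq> B \<and> word_eval F w = g))"

lemma ext_hom_word:
  assumes F: "group F" and K: "group K" and fb: "free_basis F B"
    and phi: "\<phi> ` B \<subseteq> carrier K" and w: "set (map fst w) \<subseteq> B"
  shows "ext_hom F B K \<phi> (word_eval F w) = word_eval K (mapw \<phi> w)"
proof -
  let ?P = "\<lambda>w'. set (map fst w') \<subseteq> B \<and> word_eval F w' = word_eval F w"
  have "?P (SOME w'. ?P w')" using someI[of ?P w] w by blast
  thus ?thesis unfolding ext_hom_def using free_welldef[OF F K fb phi _ w] by blast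
qed

lemma ext_hom_hom:
  assumes F: "group F" and K: "group K" and fb: "free_basis F B"
    and phi: "\<phi> ` B \<subseteq> carrier K"
  shows "ext_hom F B K \<phi> \<in> hom F K"
proof -
  interpret F: group F by fact
  interpret K: group K by fact
  have BF: "B \<subseteq> carrier F" and gen: "generate F B = carrier F" using fb by (auto simp: free_basis_def)
  have ex: "\<exists>w. set (map fst w) \<subseteq> B \<and> word_eval F w = g" if "g \<in> carrier F" for g
    using F.generate_words[OF _ BF] that gen by auto
  show ?thesis
  proof (rule homI)
    fix g assume "g \<in> carrier F"
    then obtain w where w: "set (map fst w) \<subseteq> B" "word_eval F w = g" using ex by blast
    show "ext_hom F B K \<phi> g \<in> carrier K"
      using w ext_hom_word[OF F K fb phi w(1)] mapw_carrier[OF phi w(1)] K.word_eval_carrier by simp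
  next
    fix g h assume "g \<in> carrier F" "h \<in> carrier F"
    then obtain w v where w: "set (map fst w) \<subseteq> B" "word_eval F w = g"
      and v: "set (map fst v) \<subseteq> B" "word_eval F v = h" using ex by blast
    have "g \<otimes>\<^bsub>F\<^esub> h = word_eval F (w @ v)" using w v BF by (auto simp: F.word_eval_append)
    moreover have "set (map fst (w @ v)) \<subseteq> B" using w v by auto
    ultimately have "ext_hom F B K \<phi> (g \<otimes>\<^bsub>F\<^esub> h) = word_eval K (mapw \<phi> w @ mapw \<phi> v)"
      using ext_hom_word[OF F K fb phi, of "w @ v"] by simp
    also have "\<dots> = word_eval K (mapw \<phi> w) \<otimes>\<^bsub>K\<^esub> word_eval K (mapw \<phi> v)"
      using w v mapw_carrier[OF phi] by (intro K.word_eval_append) auto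
    finally show "ext_hom F B K \<phi> (g \<otimes>\<^bsub>F\<^esub> h) = ext_hom F B K \<phi> g \<otimes>\<^bsub>K\<^esub> ext_hom F B K \<phi> h"
      using ext_hom_word[OF F K fb phi w(1)] ext_hom_word[OF F K fb phi v(1)] w(2) v(2) by simp
  qed
qed

lemma c3_apply:
  assumes "x \<noteq> y" "y \<noteq> z" "x \<noteq> z"
  shows "cycle_of_list [x, y, z] w = (if w = x then y else if w = y then z else if w = z then x else w)"
  using assms by (auto simp: transpose_def)

declare cycle_of_list.simps [simp del]

lemma c3_rot:
  assumes "x \<noteq> y" "y \<noteq> z" "x \<noteq> z"
  shows "cycle_of_list [x, y, z] = cycle_of_list [y, z, x]"
  using assms by (auto simp: fun_eq_iff c3_apply)

lemma c3_inv:
  assumes "x \<noteq> y" "y \<noteq> z" "x \<noteq> z"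
  shows "inv' (cycle_of_list [x, y, z]) = cycle_of_list [x, z, y]"
proof (rule inv_unique_comp)
  show "cycle_of_list [x, y, z] \<circ> cycle_of_list [x, z, y] = id"
    using assms by (auto simp: fun_eq_iff c3_apply)
  show "cycle_of_list [x, z, y] \<circ> cycle_of_list [x, y, z] = id"
    using assms by (auto simp: fun_eq_iff c3_apply)
qed

definition clos :: "('a \<Rightarrow> 'a) set \<Rightarrow> bool" where
  "clos G = ((\<forall>f\<in>G. \<forall>g\<in>G. f \<circ> g \<in> G) \<and> (\<forall>f\<in>G. inv' f \<in> G \<and> bij f))"

lemma clos_comp: "clos G \<Longrightarrow> f \<in> G \<Longrightarrow> g \<in> G \<Longrightarrow> f \<circ> g \<in> G"
  unfolding clos_def by blast
lemma clos_inv: "clos G \<Longrightarrow> f \<in> G \<Longrightarrow> inv' f \<in> G"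
  unfolding clos_def by blast
lemma clos_bij: "clos G \<Longrightarrow> f \<in> G \<Longrightarrow> bij f"
  unfolding clos_def by blast

definition all3 :: "('a \<Rightarrow> 'a) set \<Rightarrow> 'a set \<Rightarrow> bool" where
  "all3 G U = (\<forall>x\<in>U. \<forall>y\<in>U. \<forall>z\<in>U. x \<noteq> y \<and> y \<noteq> z \<and> x \<noteq> z \<longrightarrow> cycle_of_list [x, y, z] \<in> G)"

lemma all3D: "all3 G U \<Longrightarrow> x \<in> U \<Longrightarrow> y \<in> U \<Longrightarrow> z \<in> U \<Longrightarrow> x \<noteq> y \<Longrightarrow> y \<noteq> z \<Longrightarrow> x \<noteq> z
  \<Longrightarrow> cycle_of_list [x, y, z] \<in> G"
  unfolding all3_def by blast

lemma c3_swap_G: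
  assumes "clos G" "x \<noteq> y" "y \<noteq> z" "x \<noteq> z" "cycle_of_list [x, y, z] \<in> G"
  shows "cycle_of_list [x, z, y] \<in> G"
  using clos_inv[OF assms(1,5)] c3_inv[of x y z] assms by simp

lemma all3_three:
  assumes "clos G" "x \<noteq> y" "y \<noteq> z" "x \<noteq> z" "cycle_of_list [x, y, z] \<in> G"
  shows "all3 G {x, y, z}"
proof -
  have a: "cycle_of_list [x, z, y] \<in> G" using c3_swap_G[OF assms] .
  have e1: "cycle_of_list [y, z, x] \<in> G" using assms(5) c3_rot[OF assms(2-4)] by simp
  have e2: "cycle_of_list [z, x, y] \<in> G" using e1 c3_rot[of y z x] assms(2-4) by simp
  have e3: "cycle_of_list [z, y, x] \<in> G" using a c3_rot[of x z y] assms(2-4) by simp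
  have e4: "cycle_of_list [y, x, z] \<in> G" using e3 c3_rot[of z y x] assms(2-4) by simp
  show ?thesis unfolding all3_def
  proof (intro ballI impI)
    fix u v w assume u: "u \<in> {x, y, z}" and v: "v \<in> {x, y, z}" and w: "w \<in> {x, y, z}"
      and d: "u \<noteq> v \<and> v \<noteq> w \<and> u \<noteq> w"
    from u have "u = x \<or> u = y \<or> u = z" by simp
    moreover from v have "v = x \<or> v = y \<or> v = z" by simp
    moreover from w have "w = x \<or> w = y \<or> w = z" by simp
    ultimately show "cycle_of_list [u, v, w] \<in> G" using assms(5) a e1 e2 e3 e4 d
      by (elim disjE) simp_all
  qed
qed

lemma all3_gen:
  assumes G: "clos G" and pq: "p \<in> W" "q \<in> W" "p \<noteq> q"
    and T: "\<And>x. x \<in> W \<Longrightarrow> x \<noteq> p \<Longrightarrow> x \<noteq> q \<Longrightarrow> cycle_of_list [p, q, x] \<in> G"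
  shows "all3 G W"
proof -
  have comp: "f \<circ> g \<in> G" if "f \<in> G" "g \<in> G" for f g using G that by (rule clos_comp)
  have Ti: "cycle_of_list [p, x, q] \<in> G" if "x \<in> W" "x \<noteq> p" "x \<noteq> q" for x
    using c3_swap_G[OF G, of p q x] T that pq by auto
  have P: "cycle_of_list [p, v, w] \<in> G" if "v \<in> W" "w \<in> W" "p \<noteq> v" "v \<noteq> w" "p \<noteq> w" for v w
  proof -
    consider "v = q" | "w = q" | "v \<noteq> q" "w \<noteq> q" by blast
    thus ?thesis
    proof cases
      case 1 thus ?thesis using T that by auto
    next
      case 2 thus ?thesis using Ti that by auto
    next
      case 3
      have "cycle_of_list [p, v, w] = cycle_of_list [p, q, w] \<circ> cycle_of_list [p, v, q]"
        using that 3 pq by (auto simp: fun_eq_iff c3_apply)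
      thus ?thesis using comp T Ti that 3 by auto
    qed
  qed
  show ?thesis unfolding all3_def
  proof (intro ballI impI)
    fix x y z assume xyz: "x \<in> W" "y \<in> W" "z \<in> W" "x \<noteq> y \<and> y \<noteq> z \<and> x \<noteq> z"
    consider "x = p" | "y = p" | "z = p" | "x \<noteq> p" "y \<noteq> p" "z \<noteq> p" by blast
    thus "cycle_of_list [x, y, z] \<in> G"
    proof cases
      case 1 thus ?thesis using P xyz by auto
    next
      case 2 thus ?thesis using P[of z x] xyz c3_rot[of x y z] by auto
    next
      case 3 thus ?thesis using P[of x y] xyz c3_rot[of y z x] c3_rot[of x y z] by auto
    next
      case 4
      have "cycle_of_list [x, y, z] = cycle_of_list [p, x, y] \<circ> cycle_of_list [p, y, z]"
        using 4 xyz by (auto simp: fun_eq_iff c3_apply)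
      thus ?thesis using comp P 4 xyz by auto
    qed
  qed
qed

lemma all3_conj:
  assumes G: "clos G" and g: "g \<in> G" and U: "all3 G U"
  shows "all3 G (g ` U)"
  unfolding all3_def
proof (intro ballI impI)
  have bij: "bij g" and ig: "inv' g \<in> G" using clos_bij[OF G g] clos_inv[OF G g] by auto
  fix x' y' z' assume "x' \<in> g ` U" "y' \<in> g ` U" "z' \<in> g ` U" and d: "x' \<noteq> y' \<and> y' \<noteq> z' \<and> x' \<noteq> z'"
  then obtain x y z where xyz: "x \<in> U" "y \<in> U" "z \<in> U" "x' = g x" "y' = g y" "z' = g z" by blast
  have dd: "x \<noteq> y" "y \<noteq> z" "x \<noteq> z" using d xyz by auto
  have c: "cycle_of_list [x, y, z] \<in> G" using U xyz dd by (auto simp: all3_def)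
  have "g \<circ> cycle_of_list [x, y, z] \<circ> inv' g = cycle_of_list (map g [x, y, z])"
    using conjugation_of_cycle[OF _ bij] dd by simp
  moreover have "g \<circ> cycle_of_list [x, y, z] \<circ> inv' g \<in> G"
    using clos_comp[OF G] g c ig by auto
  ultimately show "cycle_of_list [x', y', z'] \<in> G" using xyz by simp
qed

lemma all3_union:
  assumes G: "clos G" and U: "all3 G U" and V: "all3 G V"
    and U3: "\<exists>a\<in>U. \<exists>b\<in>U. \<exists>c\<in>U. a \<noteq> b \<and> b \<noteq> c \<and> a \<noteq> c"
    and V3: "\<exists>a\<in>V. \<exists>b\<in>V. \<exists>c\<in>V. a \<noteq> b \<and> b \<noteq> c \<and> a \<noteq> c"
    and p: "p \<in> U" "p \<in> V"
  shows "all3 G (U \<union> V)"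
proof (cases "\<exists>r\<in>U \<inter> V. r \<noteq> p")
  case True
  then obtain r where r: "r \<in> U" "r \<in> V" "r \<noteq> p" by blast
  show ?thesis
  proof (rule all3_gen[OF G, of p _ r])
    fix x assume x: "x \<in> U \<union> V" "x \<noteq> p" "x \<noteq> r"
    show "cycle_of_list [p, r, x] \<in> G"
    proof (cases "x \<in> U")
      case True thus ?thesis using all3D[OF U p(1) r(1) True] r x by auto
    next
      case False hence "x \<in> V" using x by blast
      thus ?thesis using all3D[OF V p(2) r(2)] r x by auto
    qed
  qed (use p r in auto)
next
  case False
  hence UV: "\<And>z. z \<in> U \<Longrightarrow> z \<in> V \<Longrightarrow> z = p" by blast
  have "\<exists>q\<in>U. \<exists>u\<in>U. q \<noteq> p \<and> u \<noteq> p \<and> q \<noteq> u"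
  proof -
    obtain a b c where abc: "a \<in> U" "b \<in> U" "c \<in> U" "a \<noteq> b" "b \<noteq> c" "a \<noteq> c" using U3 by blast
    show ?thesis
    proof (cases "a = p")
      case True thus ?thesis using abc by (intro bexI[of _ b] bexI[of _ c]) auto
    next
      case False note a = this
      show ?thesis
      proof (cases "b = p")
        case True thus ?thesis using abc a by (intro bexI[of _ a] bexI[of _ c]) auto
      next
        case False thus ?thesis using abc a by (intro bexI[of _ a] bexI[of _ b]) auto
      qed
    qed
  qed
  then obtain q u where qu: "q \<in> U" "u \<in> U" "q \<noteq> p" "u \<noteq> p" "q \<noteq> u" by blast
  show ?thesis
  proof (rule all3_gen[OF G, of q _ u])
    fix x assume x: "x \<in> U \<union> V" "x \<noteq> q" "x \<noteq> u"
    show "cycle_of_list [q, u, x] \<in> G"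
    proof (cases "x \<in> U")
      case True thus ?thesis using all3D[OF U qu(1,2) True] qu x by auto
    next
      case False
      hence xV: "x \<in> V" "x \<noteq> p" using x p by auto
      have "\<exists>r\<in>V. r \<noteq> p \<and> r \<noteq> x"
      proof -
        obtain a b c where abc: "a \<in> V" "b \<in> V" "c \<in> V" "a \<noteq> b" "b \<noteq> c" "a \<noteq> c" using V3 by blast
        show ?thesis
        proof (cases "a \<noteq> p \<and> a \<noteq> x")
          case True thus ?thesis using abc by (intro bexI[of _ a]) auto
        next
          case F1: False
          show ?thesis
          proof (cases "b \<noteq> p \<and> b \<noteq> x")
            case True thus ?thesis using abc by (intro bexI[of _ b]) auto
          next
            case False
            hence "c \<noteq> p \<and> c \<noteq> x" using F1 abc by auto
            thus ?thesis using abc by (intro bexI[of _ c]) auto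
          qed
        qed
      qed
      then obtain r where r: "r \<in> V" "r \<noteq> p" "r \<noteq> x" by blast
      have rU: "r \<notin> U" using r UV by blast
      define g where "g = cycle_of_list [p, x, r]"
      have g: "g \<in> G" unfolding g_def using all3D[OF V p(2) xV(1) r(1)] xV r by auto
      have bij: "bij g" using clos_bij[OF G g] .
      have ig: "inv' g \<in> G" using clos_inv[OF G g] .
      have c: "cycle_of_list [q, u, p] \<in> G" using all3D[OF U qu(1,2) p(1)] qu by auto
      have "g \<circ> cycle_of_list [q, u, p] \<circ> inv' g = cycle_of_list (map g [q, u, p])"
        using conjugation_of_cycle[OF _ bij] qu by simp
      moreover have "map g [q, u, p] = [q, u, x]"
      proof -
        have "q \<noteq> x" "u \<noteq> x" "q \<noteq> r" "u \<noteq> r" using qu False rU by auto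
        thus ?thesis unfolding g_def using qu xV r by (simp add: c3_apply)
      qed
      moreover have "g \<circ> cycle_of_list [q, u, p] \<circ> inv' g \<in> G"
        using clos_comp[OF G] g c ig by auto
      ultimately show ?thesis by simp
    qed
  qed (use qu in auto)
qed

lemma perm_inv_set:
  assumes g: "g permutes S" and fin: "finite S" and US: "U \<subseteq> S" and sub: "g ` U \<subseteq> U"
  shows "g z \<in> U \<longleftrightarrow> z \<in> U"
proof -
  have inj: "inj g" using g permutes_inj by blast
  have fU: "finite U" using fin US finite_subset by blast
  have "card (g ` U) = card U" using inj by (simp add: card_image inj_on_subset)
  hence eq: "g ` U = U" using sub fU by (simp add: card_subset_eq)
  show ?thesis
  proof
    assume "g z \<in> U"
    hence "g z \<in> g ` U" using eq by simp
    thus "z \<in> U" using inj by (auto dest: injD)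
  next
    assume "z \<in> U" thus "g z \<in> U" using sub by blast
  qed
qed

lemma commutator_3cycle:
  assumes s: "bij s" and t: "bij t"
    and supp: "\<And>z. s z \<noteq> z \<Longrightarrow> t z \<noteq> z \<Longrightarrow> z = x" and sx: "s x \<noteq> x" and tx: "t x \<noteq> x"
  shows "s \<circ> t \<circ> inv' s \<circ> inv' t = cycle_of_list [x, s x, t x]"
proof -
  have is1: "inv' s (s z) = z" for z using s by (simp add: bij_is_inj)
  have is2: "s (inv' s z) = z" for z using s by (simp add: bij_is_surj surj_f_inv_f)
  have it1: "inv' t (t z) = z" for z using t by (simp add: bij_is_inj)
  have it2: "t (inv' t z) = z" for z using t by (simp add: bij_is_surj surj_f_inv_f)
  have sinj: "s a = s b \<longleftrightarrow> a = b" for a b using s by (auto dest: bij_is_inj injD)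
  have tinj: "t a = t b \<longleftrightarrow> a = b" for a b using t by (auto dest: bij_is_inj injD)
  have s_supp: "s (s z) \<noteq> s z" if "s z \<noteq> z" for z using that sinj by metis
  have d1: "s x \<noteq> t x"
  proof
    assume e: "s x = t x"
    have "s (s x) \<noteq> s x" using s_supp sx by blast
    moreover have "t (s x) \<noteq> s x" using e tinj tx by metis
    ultimately have "s x = x" using supp by blast
    thus False using sx by simp
  qed
  show ?thesis
  proof (rule ext)
    fix z
    have c3: "cycle_of_list [x, s x, t x] z = (if z = x then s x else if z = s x then t x else if z = t x then x else z)"
      using sx tx d1 by (intro c3_apply) auto
    show "(s \<circ> t \<circ> inv' s \<circ> inv' t) z = cycle_of_list [x, s x, t x] z"
    proof -
      have "(s \<circ> t \<circ> inv' s \<circ> inv' t) z = s (t (inv' s (inv' t z)))" by simp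
      also have "\<dots> = (if z = x then s x else if z = s x then t x else if z = t x then x else z)"
      proof -
        consider "z = x" | "z = s x" | "z = t x" | "z \<noteq> x" "z \<noteq> s x" "z \<noteq> t x" by blast
        thus ?thesis
        proof cases
          case 1
          let ?a = "inv' t x"
          have a1: "?a \<noteq> x" using it2 tx by metis
          have a2: "t ?a \<noteq> ?a" using it2 a1 by metis
          have "s ?a = ?a" using supp a1 a2 by blast
          hence "inv' s ?a = ?a" using is1 by metis
          thus ?thesis using 1 it2 by simp
        next
          case 2
          have "inv' t (s x) = s x"
          proof -
            have "s (s x) \<noteq> s x" using s_supp sx by blast
            hence "t (s x) = s x" using supp sx by metis
            thus ?thesis using it1 by metis
          qed
          moreover have "t (t x) \<noteq> t x" using tinj tx by metis
          hence "s (t x) = t x" using supp d1 by metis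
          ultimately show ?thesis using 2 is1 sx d1 by simp
        next
          case 3
          let ?a = "inv' s x"
          have a1: "?a \<noteq> x" using is2 sx by metis
          have a2: "s ?a \<noteq> ?a" using is2 a1 by metis
          have ta: "t ?a = ?a" using supp a1 a2 by blast
          show ?thesis using 3 it1 ta is2 sx tx d1 by simp
        next
          case 4
          show ?thesis
          proof (cases "t z = z")
            case True
            hence iz: "inv' t z = z" using it1 by metis
            show ?thesis
            proof (cases "s z = z")
              case True
              hence "inv' s z = z" using is1 by metis
              thus ?thesis using iz \<open>t z = z\<close> \<open>s z = z\<close> 4 by simp
            next
              case False
              let ?a = "inv' s z"
              have a1: "?a \<noteq> x" using is2 4 by metis
              have a2: "s ?a \<noteq> ?a" using is2 False by metis
              have "t ?a = ?a" using supp a1 a2 by blast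
              thus ?thesis using iz is2 4 by simp
            qed
          next
            case False
            let ?a = "inv' t z"
            have a1: "?a \<noteq> x" using it2 4 by metis
            have a2: "t ?a \<noteq> ?a" using it2 False by metis
            have sa: "s ?a = ?a" using supp a1 a2 by blast
            hence "inv' s ?a = ?a" using is1 by metis
            moreover have "s z = z" using supp False 4 by blast
            ultimately show ?thesis using it2 4 by simp
          qed
        qed
      qed
      finally show ?thesis using c3 by simp
    qed
  qed
qed

lemma extend_perm:
  assumes fin: "finite S" and D: "D \<subseteq> S" and fD: "f ` D \<subseteq> S" and inj: "inj_on f D"
  shows "\<exists>\<rho>. \<rho> permutes S \<and> (\<forall>i\<in>D. \<rho> i = f i)"
proof -
  have cD: "card (f ` D) = card D" using inj by (simp add: card_image)
  have fin1: "finite (S - D)" "finite (S - f ` D)" using fin by auto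
  have "card (S - D) = card (S - f ` D)"
    using cD D fD fin by (simp add: card_Diff_subset finite_subset)
  then obtain g where g: "bij_betw g (S - D) (S - f ` D)" using finite_same_card_bij fin1 by blast
  define \<rho> where "\<rho> i = (if i \<in> D then f i else if i \<in> S then g i else i)" for i
  have b1: "bij_betw \<rho> D (f ` D)"
    using inj by (auto simp: bij_betw_def \<rho>_def inj_on_def)
  have b2: "bij_betw \<rho> (S - D) (S - f ` D)"
    using g by (rule bij_betw_cong[THEN iffD1, rotated]) (auto simp: \<rho>_def)
  have "bij_betw \<rho> (D \<union> (S - D)) (f ` D \<union> (S - f ` D))"
    by (rule bij_betw_combine[OF b1 b2]) auto
  moreover have "D \<union> (S - D) = S" "f ` D \<union> (S - f ` D) = S" using D fD by auto
  ultimately have "bij_betw \<rho> S S" by simp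
  hence "\<rho> permutes S" by (rule bij_imp_permutes) (auto simp: \<rho>_def D[THEN subsetD])
  thus ?thesis by (auto simp: \<rho>_def)
qed

lemma uniform_power:
  assumes fin: "finite S"
  shows "\<exists>M. M > 0 \<and> even M \<and> (\<forall>\<rho>. \<rho> permutes S \<longrightarrow> \<rho> ^^ M = id)"
proof -
  define PS where "PS = {p. p permutes S}"
  have fPS: "finite PS" using finite_permutations[OF fin] by (simp add: PS_def)
  define ord where "ord p = (SOME n. p ^^ n = id \<and> n > 0)" for p :: "'a \<Rightarrow> 'a"
  have ord: "p ^^ ord p = id \<and> ord p > 0" if "p \<in> PS" for p
  proof -
    have "permutation p" using that fin by (auto simp: PS_def permutation_permutes)
    then obtain n where "p ^^ n = id" "n > 0" by (rule permutation_is_nilpotent)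
    thus ?thesis unfolding ord_def using someI_ex[of "\<lambda>n. p ^^ n = id \<and> n > 0"] by blast
  qed
  define M where "M = 2 * (\<Prod>p\<in>PS. ord p)"
  have pos: "(\<Prod>p\<in>PS. ord p) > 0" using ord by (simp add: prod_pos)
  have "\<rho> ^^ M = id" if "\<rho> permutes S" for \<rho>
  proof -
    have r: "\<rho> \<in> PS" using that by (simp add: PS_def)
    have "(\<Prod>p\<in>PS. ord p) = ord \<rho> * (\<Prod>p\<in>PS - {\<rho>}. ord p)"
      using fPS r by (simp add: prod.remove)
    hence "M = ord \<rho> * (2 * (\<Prod>p\<in>PS - {\<rho>}. ord p))" by (simp add: M_def)
    hence "\<rho> ^^ M = (\<rho> ^^ ord \<rho>) ^^ (2 * (\<Prod>p\<in>PS - {\<rho>}. ord p))" by (simp add: funpow_mult)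
    thus ?thesis using ord[OF r] by (simp add: id_funpow)
  qed
  thus ?thesis using pos by (intro exI[of _ M]) (auto simp: M_def)
qed

lemma commute_disjoint:
  assumes f: "f permutes S" and g: "g permutes T" and d: "S \<inter> T = {}"
  shows "f \<circ> g = g \<circ> f"
proof
  fix z
  show "(f \<circ> g) z = (g \<circ> f) z"
  proof (cases "z \<in> S")
    case True
    hence "z \<notin> T" "f z \<in> S" using d permutes_in_image[OF f] by auto
    hence "g z = z" "g (f z) = f z" using permutes_not_in[OF g] d by auto
    thus ?thesis by simp
  next
    case False
    hence fz: "f z = z" using permutes_not_in[OF f] by auto
    show ?thesis
    proof (cases "z \<in> T")
      case True
      hence "g z \<in> T" using permutes_in_image[OF g] by auto
      hence "g z \<notin> S" using d by auto
      thus ?thesis using fz permutes_not_in[OF f] by simp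
    next
      case False
      thus ?thesis using fz permutes_not_in[OF g] by simp
    qed
  qed
qed

lemma funpow_comp_commute:
  assumes "f \<circ> g = g \<circ> f"
  shows "(f \<circ> g) ^^ n = f ^^ n \<circ> g ^^ n"
proof -
  have c0: "g (f a) = f (g a)" for a using assms by (metis comp_apply)
  have c: "g ((f ^^ n) a) = (f ^^ n) (g a)" for n a
    by (induct n arbitrary: a) (auto simp: c0)
  show ?thesis
  proof (induct n)
    case (Suc n)
    show ?case
    proof
      fix a
      have "((f \<circ> g) ^^ Suc n) a = f (g (((f \<circ> g) ^^ n) a))" by simp
      also have "\<dots> = f (g ((f ^^ n) ((g ^^ n) a)))" unfolding Suc.hyps by simp
      also have "\<dots> = f ((f ^^ n) (g ((g ^^ n) a)))" using c by simp
      also have "\<dots> = (f ^^ Suc n \<circ> g ^^ Suc n) a" by simp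
      finally show "((f \<circ> g) ^^ Suc n) a = (f ^^ Suc n \<circ> g ^^ Suc n) a" .
    qed
  qed simp
qed

lemma cycle_even:
  assumes "distinct cs" "odd (length cs)"
  shows "evenperm (cycle_of_list cs)"
proof -
  have "swapidseq (length cs - 1) (cycle_of_list cs)"
    using swapidseq_ext_of_cycles[OF assms(1)] by (rule swapidseq_ext_imp_swapidseq)
  moreover have "even (length cs - 1)" using assms(2) by (cases "length cs") auto
  ultimately have "evenperm (cycle_of_list cs) = True" by (intro evenperm_unique) auto
  thus ?thesis by simp
qed

lemma cycle_rot_apply:
  assumes "distinct cs" "i < length cs"
  shows "(cycle_of_list cs ^^ n) (cs ! i) = cs ! ((i + n) mod length cs)"
proof -
  have "map (cycle_of_list cs ^^ n) cs = rotate n cs" by (rule cyclic_rotation[OF assms(1)])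
  hence "(cycle_of_list cs ^^ n) (cs ! i) = rotate n cs ! i" using assms(2) by (metis nth_map)
  thus ?thesis using assms(2) by (simp add: nth_rotate add.commute)
qed

lemma cycle_pow_out:
  assumes "z \<notin> set cs" shows "(cycle_of_list cs ^^ n) z = z"
  using permutes_not_in[OF permutes_funpow[OF cycle_permutes] assms] .

lemma transpose_pow_even:
  assumes "even n" shows "transpose u v ^^ n = id"
proof -
  obtain j where n: "n = 2 * j" using assms by blast
  have "transpose u v ^^ 2 = id" by (simp add: numeral_2_eq_2 fun_eq_iff)
  thus ?thesis unfolding n by (simp add: funpow_mult[symmetric] id_funpow)
qed

lemma gen_sub:
  assumes "Xg \<subseteq> carrier (alt_group k)"
  shows "subgroup (generate (alt_group k) Xg) (alt_group k)"
  using group.generate_is_subgroup[OF alt_group_is_group assms] .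

lemma gen_perm:
  assumes "Xg \<subseteq> carrier (alt_group k)" "p \<in> generate (alt_group k) Xg"
  shows "p permutes {1..k}"
  using subgroup.subset[OF gen_sub[OF assms(1)]] assms(2) by (auto simp: alt_group_carrier)

lemma gen_id:
  assumes "Xg \<subseteq> carrier (alt_group k)"
  shows "id \<in> generate (alt_group k) Xg"
  using subgroup.one_closed[OF gen_sub[OF assms]] by (simp add: alt_group_one)

lemma gen_clos:
  assumes Xg: "Xg \<subseteq> carrier (alt_group k)"
  shows "clos (generate (alt_group k) Xg)"
  unfolding clos_def
proof (intro conjI ballI)
  have sg: "subgroup (generate (alt_group k) Xg) (alt_group k)" by (rule gen_sub[OF Xg])
  fix f g assume "f \<in> generate (alt_group k) Xg" "g \<in> generate (alt_group k) Xg"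
  thus "f \<circ> g \<in> generate (alt_group k) Xg"
    using subgroup.m_closed[OF sg] by (simp add: alt_group_mult)
next
  have sg: "subgroup (generate (alt_group k) Xg) (alt_group k)" by (rule gen_sub[OF Xg])
  fix f assume f: "f \<in> generate (alt_group k) Xg"
  have fc: "f \<in> carrier (alt_group k)" using subgroup.subset[OF sg] f by blast
  show "inv' f \<in> generate (alt_group k) Xg"
    using subgroup.m_inv_closed[OF sg f] alt_group_inv_equality[OF fc] by simp
  show "bij f" using gen_perm[OF Xg f] by (rule permutes_bij)
qed

lemma clos_pow:
  assumes "clos G" "id \<in> G" "f \<in> G" shows "f ^^ n \<in> G"
  using assms by (induct n) (auto intro: clos_comp)

lemma alt_from_all3:
  assumes Xg: "Xg \<subseteq> carrier (alt_group k)" and A: "all3 (generate (alt_group k) Xg) {1..k}"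
  shows "generate (alt_group k) Xg = carrier (alt_group k)"
proof -
  interpret A: group "alt_group k" by (rule alt_group_is_group)
  have sg: "subgroup (generate (alt_group k) Xg) (alt_group k)"
    by (rule A.generate_is_subgroup[OF Xg])
  have "three_cycles k \<subseteq> generate (alt_group k) Xg"
  proof
    fix p assume "p \<in> three_cycles k"
    then obtain cs where cs: "p = cycle_of_list cs" "distinct cs" "length cs = 3" "set cs \<subseteq> {1..k}"
      by auto
    have "cs = [cs ! 0, cs ! 1, cs ! 2]" by (rule stupid_lemma[OF cs(3)])
    then obtain x y z where xyz: "cs = [x, y, z]" by metis
    show "p \<in> generate (alt_group k) Xg"
      using all3D[OF A, of x y z] cs xyz by auto
  qed
  hence "generate (alt_group k) (three_cycles k) \<subseteq> generate (alt_group k) Xg"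
    using A.generate_subgroup_incl[OF _ sg] by blast
  hence "carrier (alt_group k) \<subseteq> generate (alt_group k) Xg"
    using alt_group_carrier_as_three_cycles by blast
  thus ?thesis using subgroup.subset[OF sg] by blast
qed

lemma perm_sub: "p permutes S \<Longrightarrow> S \<subseteq> T \<Longrightarrow> p permutes T"
  by (metis permutes_subset)

lemma max_card_member:
  assumes "finite Us" "U0 \<in> Us"
  shows "\<exists>U\<in>Us. \<forall>U'\<in>Us. card U' \<le> card U"
proof -
  have "Max (card ` Us) \<in> card ` Us" using assms by (intro Max_in) auto
  then obtain U where "U \<in> Us" "card U = Max (card ` Us)" by auto
  thus ?thesis using assms by (metis Max_ge finite_imageI image_eqI)
qed

lemma core:
  fixes B :: "'a set" and D :: "'a \<Rightarrow> nat set" and \<pi> :: "'a \<Rightarrow> nat \<Rightarrow> nat"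
  assumes Dsub: "\<And>c. c \<in> B \<Longrightarrow> D c \<subseteq> {1..m}"
    and Dimg: "\<And>c. c \<in> B \<Longrightarrow> \<pi> c ` D c \<subseteq> {1..m}"
    and Dinj: "\<And>c. c \<in> B \<Longrightarrow> inj_on (\<pi> c) (D c)"
    and ab: "a \<in> B" "b \<in> B" "a \<noteq> b"
    and q: "q \<in> {1..m}" "q \<notin> D b"
    and conn: "\<And>U. q \<in> U \<Longrightarrow> (\<And>c i. c \<in> B \<Longrightarrow> i \<in> D c \<Longrightarrow> (i \<in> U \<longleftrightarrow> \<pi> c i \<in> U)) \<Longrightarrow> {1..m} \<subseteq> U"
  shows "\<exists>k \<tau>. (\<forall>c\<in>B. \<tau> c \<in> carrier (alt_group k)) \<and> (\<forall>c\<in>B. \<forall>i\<in>D c. \<tau> c i = \<pi> c i)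
              \<and> generate (alt_group k) (\<tau> ` B) = carrier (alt_group k)"
proof -
  define N where "N = Suc m"
  define R where "R c \<rho> \<longleftrightarrow> \<rho> permutes {1..N} \<and> (\<forall>i\<in>D c. \<rho> i = \<pi> c i) \<and> (c \<noteq> b \<longrightarrow> \<rho> N = N)
      \<and> (c = b \<longrightarrow> \<rho> q = N)" for c \<rho>
  have exR: "\<exists>\<rho>. R c \<rho>" if c: "c \<in> B" for c
  proof (cases "c = b")
    case True
    define f where "f = (\<pi> b)(q := N)"
    have "\<exists>\<rho>. \<rho> permutes {1..N} \<and> (\<forall>i\<in>insert q (D b). \<rho> i = f i)"
    proof (rule extend_perm)
      show "insert q (D b) \<subseteq> {1..N}" using Dsub[OF ab(2)] q by (auto simp: N_def)
      show "f ` insert q (D b) \<subseteq> {1..N}" using Dimg[OF ab(2)] q by (auto simp: N_def f_def)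
      show "inj_on f (insert q (D b))"
      proof -
        have "inj_on f (D b)" using Dinj[OF ab(2)] q(2) unfolding f_def
          by (metis (mono_tags, lifting) fun_upd_apply inj_on_cong)
        moreover have "f q \<notin> f ` (D b - {q})"
          using Dimg[OF ab(2)] q(2) by (auto simp: f_def N_def)
        ultimately show ?thesis by simp
      qed
    qed simp
    then obtain \<rho> where "\<rho> permutes {1..N}" "\<forall>i\<in>insert q (D b). \<rho> i = f i" by blast
    thus ?thesis using True q(2) by (intro exI[of _ \<rho>]) (auto simp: R_def f_def)
  next
    case False
    obtain \<rho> where r: "\<rho> permutes {1..m}" "\<forall>i\<in>D c. \<rho> i = \<pi> c i"
      using extend_perm[OF _ Dsub[OF c] Dimg[OF c] Dinj[OF c]] by auto
    have "\<rho> permutes {1..N}" using r(1) by (rule perm_sub) (auto simp: N_def)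
    moreover have "\<rho> N = N" using permutes_not_in[OF r(1)] by (simp add: N_def)
    ultimately show ?thesis using r False by (intro exI[of _ \<rho>]) (auto simp: R_def)
  qed
  define \<rho> where "\<rho> c = (SOME \<rho>. R c \<rho>)" for c
  have \<rho>: "R c (\<rho> c)" if "c \<in> B" for c unfolding \<rho>_def using exR[OF that] by (rule someI_ex)
  have \<rho>perm: "\<rho> c permutes {1..N}" if "c \<in> B" for c using \<rho>[OF that] by (simp add: R_def)
  have \<rho>D: "\<rho> c i = \<pi> c i" if "c \<in> B" "i \<in> D c" for c i using \<rho>[OF that(1)] that(2) by (simp add: R_def)
  have \<rho>big: "\<rho> c z = z" if "c \<in> B" "z > N" for c z
    using permutes_not_in[OF \<rho>perm[OF that(1)]] that(2) by auto
  have \<rho>N: "\<rho> c z = z" if "c \<in> B" "c \<noteq> b" "z \<ge> N" for c z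
  proof (cases "z = N")
    case True thus ?thesis using \<rho>[OF that(1)] that(2) by (simp add: R_def)
  next
    case False thus ?thesis using \<rho>big[OF that(1)] that(3) by simp
  qed
  have \<rho>q: "\<rho> b q = N" using \<rho>[OF ab(2)] by (simp add: R_def)
  obtain M where M: "M > 0" "even M" "\<And>\<rho>. \<rho> permutes {1..N} \<Longrightarrow> \<rho> ^^ M = id"
    using uniform_power[of "{1..N}"] by auto
  define P where "P = 2 * M + 5"
  define \<alpha> where "\<alpha> i = (if i = P - 1 then N else N + 1 + i)" for i
  define \<beta> where "\<beta> i = (if i = 0 then N + 1 else N + P - 1 + i)" for i
  define As where "As = map \<alpha> [0..<P]"
  define Bs where "Bs = map \<beta> [0..<P]"
  define k where "k = N + 2 * P - 2"
  define x where "x = N + 1"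
  have P: "P > M + 3" "odd P" "P \<ge> 5" by (auto simp: P_def)
  have lenA: "length As = P" and lenB: "length Bs = P" by (auto simp: As_def Bs_def)
  have nthA: "As ! i = \<alpha> i" if "i < P" for i using that by (simp add: As_def)
  have nthB: "Bs ! i = \<beta> i" if "i < P" for i using that by (simp add: Bs_def)
  have \<alpha>inj: "inj_on \<alpha> {0..<P}" by (auto simp: inj_on_def \<alpha>_def split: if_splits)
  have \<beta>inj: "inj_on \<beta> {0..<P}" by (auto simp: inj_on_def \<beta>_def split: if_splits)
  have distA: "distinct As" using \<alpha>inj by (simp add: As_def distinct_map)
  have distB: "distinct Bs" using \<beta>inj by (simp add: Bs_def distinct_map)
  have setA: "set As = {N..N + P - 1}"
  proof
    show "set As \<subseteq> {N..N + P - 1}" using P by (auto simp: As_def \<alpha>_def)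
    show "{N..N + P - 1} \<subseteq> set As"
    proof
      fix z assume z: "z \<in> {N..N + P - 1}"
      show "z \<in> set As"
      proof (cases "z = N")
        case True
        hence "z = \<alpha> (P - 1)" by (simp add: \<alpha>_def)
        thus ?thesis using P by (auto simp: As_def)
      next
        case False
        hence "z = \<alpha> (z - N - 1)" using z P by (auto simp: \<alpha>_def)
        moreover have "z - N - 1 < P" using z P False by auto
        ultimately show ?thesis by (auto simp: As_def)
      qed
    qed
  qed
  have setB: "set Bs = insert (N + 1) {N + P..N + 2 * P - 2}"
  proof
    show "set Bs \<subseteq> insert (N + 1) {N + P..N + 2 * P - 2}" using P by (auto simp: Bs_def \<beta>_def)
    show "insert (N + 1) {N + P..N + 2 * P - 2} \<subseteq> set Bs"
    proof
      fix z assume z: "z \<in> insert (N + 1) {N + P..N + 2 * P - 2}"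
      show "z \<in> set Bs"
      proof (cases "z = N + 1")
        case True
        hence "z = \<beta> 0" by (simp add: \<beta>_def)
        thus ?thesis using P by (auto simp: Bs_def)
      next
        case False
        hence "z = \<beta> (z - N - P + 1)" using z P by (auto simp: \<beta>_def)
        moreover have "z - N - P + 1 < P" using z P False by auto
        ultimately show ?thesis by (auto simp: Bs_def)
      qed
    qed
  qed
  define \<kappa>a where "\<kappa>a = cycle_of_list As"
  define \<kappa>b where "\<kappa>b = cycle_of_list Bs"
  have \<alpha>M1: "\<alpha> (M + 1) = N + M + 2" and \<alpha>M2: "\<alpha> (M + 2) = N + M + 3"
    using P by (auto simp: \<alpha>_def)
  have \<beta>M1: "\<beta> (M + 1) = N + P + M" and \<beta>M2: "\<beta> (M + 2) = N + P + M + 1"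
    using P by (auto simp: \<beta>_def)
  have \<alpha>M: "\<alpha> M = N + 1 + M" and \<beta>M: "\<beta> M = N + P - 1 + M" using P M by (auto simp: \<alpha>_def \<beta>_def)
  define E1 where "E1 = {N + M + 2, N + M + 3}"
  define E2 where "E2 = {N + P + M, N + P + M + 1}"
  define \<epsilon> where "\<epsilon> c = (if evenperm (\<rho> c) then id else if c = b then transpose (N + M + 2) (N + M + 3)
      else transpose (N + P + M) (N + P + M + 1))" for c
  define \<tau> where "\<tau> c = (if c = a then \<rho> c \<circ> \<kappa>a \<circ> \<epsilon> c else if c = b then \<rho> c \<circ> \<kappa>b \<circ> \<epsilon> c
      else \<rho> c \<circ> \<epsilon> c)" for c
  have \<epsilon>perm1: "\<epsilon> b permutes E1" by (auto simp: \<epsilon>_def E1_def intro: permutes_swap_id permutes_id)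
  have \<epsilon>perm2: "\<epsilon> c permutes E2" if "c \<noteq> b" for c
    using that by (auto simp: \<epsilon>_def E2_def intro: permutes_swap_id permutes_id)
  have \<epsilon>pow: "\<epsilon> c ^^ M = id" for c
    using M(2) by (auto simp: \<epsilon>_def id_funpow transpose_pow_even)
  have \<epsilon>odd: "evenperm (\<epsilon> c) = evenperm (\<rho> c)" for c
    by (auto simp: \<epsilon>_def evenperm_swap)
  have \<epsilon>perm: "permutation (\<epsilon> c)" for c
    unfolding \<epsilon>_def by (auto intro: permutation_swap_id)
  have \<kappa>aperm: "\<kappa>a permutes {N..N + P - 1}" using cycle_permutes[of As] setA by (simp add: \<kappa>a_def)
  have \<kappa>bperm: "\<kappa>b permutes insert (N + 1) {N + P..N + 2 * P - 2}"
    using cycle_permutes[of Bs] setB by (simp add: \<kappa>b_def)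
  have \<kappa>aeven: "evenperm \<kappa>a" unfolding \<kappa>a_def using cycle_even[OF distA] P lenA by simp
  have \<kappa>beven: "evenperm \<kappa>b" unfolding \<kappa>b_def using cycle_even[OF distB] P lenB by simp
  have \<tau>a: "\<tau> a = \<rho> a \<circ> \<kappa>a \<circ> \<epsilon> a" by (simp add: \<tau>_def)
  have \<tau>b: "\<tau> b = \<rho> b \<circ> \<kappa>b \<circ> \<epsilon> b" using ab by (simp add: \<tau>_def)
  have \<tau>c: "\<tau> c = \<rho> c \<circ> \<epsilon> c" if "c \<noteq> a" "c \<noteq> b" for c using that by (simp add: \<tau>_def)
  have kN: "N \<le> k" "1 \<le> N" using P by (auto simp: k_def N_def)
  have \<tau>alt: "\<tau> c \<in> carrier (alt_group k)" if c: "c \<in> B" for c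
  proof -
    have r1: "\<rho> c permutes {1..k}" by (rule perm_sub[OF \<rho>perm[OF c]]) (use kN in auto)
    have rp: "permutation (\<rho> c)" using \<rho>perm[OF c] by (auto simp: permutation_permutes)
    have e1: "\<epsilon> c permutes {1..k}"
    proof (cases "c = b")
      case True show ?thesis unfolding True by (rule perm_sub[OF \<epsilon>perm1]) (use P in \<open>auto simp: E1_def k_def\<close>)
    next
      case False show ?thesis by (rule perm_sub[OF \<epsilon>perm2[OF False]]) (use P in \<open>auto simp: E2_def k_def\<close>)
    qed
    have ka: "\<kappa>a permutes {1..k}" by (rule perm_sub[OF \<kappa>aperm]) (use P kN in \<open>auto simp: k_def\<close>)
    have kb: "\<kappa>b permutes {1..k}" by (rule perm_sub[OF \<kappa>bperm]) (use P kN in \<open>auto simp: k_def\<close>)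
    have kap: "permutation \<kappa>a" "permutation \<kappa>b" unfolding \<kappa>a_def \<kappa>b_def by (auto intro: permutation_of_cycle)
    consider "c = a" | "c = b" | "c \<noteq> a" "c \<noteq> b" by blast
    thus ?thesis
    proof cases
      case 1
      have "evenperm (\<rho> c \<circ> \<kappa>a \<circ> \<epsilon> c)"
        using evenperm_comp[OF permutation_compose[OF rp kap(1)] \<epsilon>perm]
          evenperm_comp[OF rp kap(1)] \<kappa>aeven \<epsilon>odd by simp
      moreover have "\<rho> c \<circ> \<kappa>a \<circ> \<epsilon> c permutes {1..k}"
        using r1 ka e1 by (intro permutes_compose)
      ultimately show ?thesis using 1 \<tau>a by (simp add: alt_group_carrier)
    next
      case 2
      have "evenperm (\<rho> c \<circ> \<kappa>b \<circ> \<epsilon> c)"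
        using evenperm_comp[OF permutation_compose[OF rp kap(2)] \<epsilon>perm]
          evenperm_comp[OF rp kap(2)] \<kappa>beven \<epsilon>odd by simp
      moreover have "\<rho> c \<circ> \<kappa>b \<circ> \<epsilon> c permutes {1..k}"
        using r1 kb e1 by (intro permutes_compose)
      ultimately show ?thesis using 2 \<tau>b by (simp add: alt_group_carrier)
    next
      case 3
      have "evenperm (\<rho> c \<circ> \<epsilon> c)" using evenperm_comp[OF rp \<epsilon>perm] \<epsilon>odd by simp
      moreover have "\<rho> c \<circ> \<epsilon> c permutes {1..k}" using r1 e1 by (intro permutes_compose)
      ultimately show ?thesis using 3 \<tau>c by (simp add: alt_group_carrier)
    qed
  qed
  have \<epsilon>small: "\<epsilon> c z = z" if "z \<le> N" for c z
    using that P by (auto simp: \<epsilon>_def transpose_def)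
  have \<kappa>asmall: "\<kappa>a z = z" if "z < N" for z
    using permutes_not_in[OF \<kappa>aperm] that by auto
  have \<kappa>bsmall: "\<kappa>b z = z" if "z \<le> N" for z
    using permutes_not_in[OF \<kappa>bperm] that P by auto
  have \<tau>D: "\<tau> c i = \<pi> c i" if c: "c \<in> B" and i: "i \<in> D c" for c i
  proof -
    have im: "i \<le> m" using Dsub[OF c] i by auto
    hence "i < N" "i \<le> N" by (auto simp: N_def)
    hence "\<tau> c i = \<rho> c i" unfolding \<tau>_def using \<epsilon>small \<kappa>asmall \<kappa>bsmall by auto
    thus ?thesis using \<rho>D[OF c i] by simp
  qed
  define G where "G = generate (alt_group k) (\<tau> ` B)"
  have TB: "\<tau> ` B \<subseteq> carrier (alt_group k)" using \<tau>alt by auto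
  have Gc: "clos G" unfolding G_def by (rule gen_clos[OF TB])
  have Gid: "id \<in> G" unfolding G_def by (rule gen_id[OF TB])
  have Gperm: "g permutes {1..k}" if "g \<in> G" for g using gen_perm[OF TB] that by (simp add: G_def)
  have \<tau>G: "\<tau> c \<in> G" if "c \<in> B" for c unfolding G_def using that by (auto intro: generate.incl)
  have powa: "\<tau> a ^^ M = \<kappa>a ^^ M"
  proof -
    have p1: "\<kappa>a \<circ> \<epsilon> a permutes {N..N + P - 1} \<union> E2"
      by (intro permutes_compose perm_sub[OF \<kappa>aperm] perm_sub[OF \<epsilon>perm2[OF ab(3)]]) auto
    have rho_a: "\<rho> a permutes {1..m}"
    proof (rule permutes_superset[OF \<rho>perm[OF ab(1)]])
      fix z assume "z \<in> {1..N} - {1..m}" thus "\<rho> a z = z" using \<rho>N[OF ab(1) ab(3)] by (auto simp: N_def)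
    qed
    have d1: "{1..m} \<inter> ({N..N + P - 1} \<union> E2) = {}" by (auto simp: E2_def N_def)
    have d2: "{N..N + P - 1} \<inter> E2 = {}" using P by (auto simp: E2_def)
    have "\<tau> a = \<rho> a \<circ> (\<kappa>a \<circ> \<epsilon> a)" using \<tau>a by (simp add: o_assoc)
    hence "\<tau> a ^^ M = \<rho> a ^^ M \<circ> (\<kappa>a \<circ> \<epsilon> a) ^^ M"
      using funpow_comp_commute[OF commute_disjoint[OF rho_a p1 d1]] by simp
    also have "\<dots> = (\<kappa>a \<circ> \<epsilon> a) ^^ M" using M(3)[OF \<rho>perm[OF ab(1)]] by simp
    also have "\<dots> = \<kappa>a ^^ M \<circ> \<epsilon> a ^^ M"
      using funpow_comp_commute[OF commute_disjoint[OF \<kappa>aperm \<epsilon>perm2[OF ab(3)] d2]] by simp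
    finally show ?thesis using \<epsilon>pow by simp
  qed
  have powb: "\<tau> b ^^ M = \<kappa>b ^^ M"
  proof -
    let ?SB = "insert (N + 1) {N + P..N + 2 * P - 2}"
    have p1: "\<kappa>b \<circ> \<epsilon> b permutes ?SB \<union> E1"
      by (intro permutes_compose perm_sub[OF \<kappa>bperm] perm_sub[OF \<epsilon>perm1]) auto
    have d1: "{1..N} \<inter> (?SB \<union> E1) = {}" using P by (auto simp: E1_def)
    have d2: "?SB \<inter> E1 = {}" using P by (auto simp: E1_def)
    have "\<tau> b = \<rho> b \<circ> (\<kappa>b \<circ> \<epsilon> b)" using \<tau>b by (simp add: o_assoc)
    hence "\<tau> b ^^ M = \<rho> b ^^ M \<circ> (\<kappa>b \<circ> \<epsilon> b) ^^ M"
      using funpow_comp_commute[OF commute_disjoint[OF \<rho>perm[OF ab(2)] p1 d1]] by simp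
    also have "\<dots> = (\<kappa>b \<circ> \<epsilon> b) ^^ M" using M(3)[OF \<rho>perm[OF ab(2)]] by simp
    also have "\<dots> = \<kappa>b ^^ M \<circ> \<epsilon> b ^^ M"
      using funpow_comp_commute[OF commute_disjoint[OF \<kappa>bperm \<epsilon>perm1 d2]] by simp
    finally show ?thesis using \<epsilon>pow by simp
  qed
  define s where "s = \<kappa>a ^^ M"
  define t where "t = \<kappa>b ^^ M"
  have sG: "s \<in> G" unfolding s_def powa[symmetric] by (rule clos_pow[OF Gc Gid \<tau>G[OF ab(1)]])
  have tG: "t \<in> G" unfolding t_def powb[symmetric] by (rule clos_pow[OF Gc Gid \<tau>G[OF ab(2)]])
  have x0: "x = As ! 0" "x = Bs ! 0" using P by (auto simp: x_def nthA nthB \<alpha>_def \<beta>_def)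
  have sx: "s x = \<alpha> M"
    using cycle_rot_apply[OF distA, of 0 M] P lenA x0 M by (simp add: s_def \<kappa>a_def nthA)
  have tx: "t x = \<beta> M"
    using cycle_rot_apply[OF distB, of 0 M] P lenB x0 M by (simp add: t_def \<kappa>b_def nthB)
  have dis: "x \<noteq> \<alpha> M" "\<alpha> M \<noteq> \<beta> M" "x \<noteq> \<beta> M" using M P by (auto simp: x_def \<alpha>M \<beta>M)
  have ssupp: "z \<in> set As" if "s z \<noteq> z" for z
    using cycle_pow_out[of z As M] that by (auto simp: s_def \<kappa>a_def)
  have tsupp: "z \<in> set Bs" if "t z \<noteq> z" for z
    using cycle_pow_out[of z Bs M] that by (auto simp: t_def \<kappa>b_def)
  have c3G: "cycle_of_list [x, \<alpha> M, \<beta> M] \<in> G"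
  proof -
    have "s \<circ> t \<circ> inv' s \<circ> inv' t = cycle_of_list [x, s x, t x]"
    proof (rule commutator_3cycle)
      show "bij s" "bij t" using clos_bij[OF Gc] sG tG by auto
      fix z assume "s z \<noteq> z" "t z \<noteq> z"
      hence "z \<in> set As" "z \<in> set Bs" using ssupp tsupp by auto
      thus "z = x" using setA setB P by (auto simp: x_def)
    qed (use sx tx dis in auto)
    moreover have "s \<circ> t \<circ> inv' s \<circ> inv' t \<in> G"
      using clos_comp[OF Gc] clos_inv[OF Gc] sG tG by metis
    ultimately show ?thesis using sx tx by simp
  qed
  define V0 where "V0 = {x, \<alpha> M, \<beta> M}"
  have V0: "all3 G V0" unfolding V0_def using all3_three[OF Gc dis(1,2,3) c3G] .
  have V0k: "V0 \<subseteq> {1..k}" using P by (auto simp: V0_def x_def \<alpha>M \<beta>M k_def N_def)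
  define Us where "Us = {U. V0 \<subseteq> U \<and> U \<subseteq> {1..k} \<and> all3 G U}"
  have fUs: "finite Us" by (rule finite_subset[of _ "Pow {1..k}"]) (auto simp: Us_def)
  obtain U where U: "U \<in> Us" and Umax: "\<And>U'. U' \<in> Us \<Longrightarrow> card U' \<le> card U"
    using max_card_member[OF fUs, of V0] V0 V0k by (auto simp: Us_def)
  have Uk: "U \<subseteq> {1..k}" and V0U: "V0 \<subseteq> U" and UA: "all3 G U" using U by (auto simp: Us_def)
  have grow: "g ` U \<subseteq> U" if g: "g \<in> G" and u: "u \<in> U" "g u \<in> U" for g u
  proof -
    have gp: "g permutes {1..k}" by (rule Gperm[OF g])
    have gi: "inj g" using permutes_inj[OF gp] .
    have A1: "all3 G (g ` U)" by (rule all3_conj[OF Gc g UA])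
    have d1: "\<exists>a\<in>U. \<exists>b\<in>U. \<exists>c\<in>U. a \<noteq> b \<and> b \<noteq> c \<and> a \<noteq> c"
      using V0U dis by (intro bexI[of _ x] bexI[of _ "\<alpha> M"] bexI[of _ "\<beta> M"]) (auto simp: V0_def)
    have d2: "\<exists>a\<in>g ` U. \<exists>b\<in>g ` U. \<exists>c\<in>g ` U. a \<noteq> b \<and> b \<noteq> c \<and> a \<noteq> c"
      using V0U dis gi
      by (intro bexI[of _ "g x"] bexI[of _ "g (\<alpha> M)"] bexI[of _ "g (\<beta> M)"])
         (auto simp: V0_def inj_eq)
    have A2: "all3 G (U \<union> g ` U)" using all3_union[OF Gc UA A1 d1 d2, of "g u"] u by auto
    have "g ` U \<subseteq> {1..k}" using Uk permutes_in_image[OF gp] by auto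
    hence "U \<union> g ` U \<in> Us" using A2 Uk V0U by (auto simp: Us_def)
    hence "card (U \<union> g ` U) \<le> card U" by (rule Umax)
    moreover have "finite (U \<union> g ` U)" using Uk \<open>g ` U \<subseteq> {1..k}\<close> by (auto intro: finite_subset)
    moreover have "card U \<le> card (U \<union> g ` U)" using \<open>finite (U \<union> g ` U)\<close> by (rule card_mono) auto
    ultimately have "U = U \<union> g ` U" using card_subset_eq[of "U \<union> g ` U" U] by auto
    thus ?thesis by blast
  qed
  have inv: "\<tau> c z \<in> U \<longleftrightarrow> z \<in> U" if c: "c \<in> B" and w: "w \<in> U" "\<tau> c w \<in> U" for c w z
  proof -
    have "\<tau> c ` U \<subseteq> U" using grow[OF \<tau>G[OF c] w] .
    thus ?thesis using perm_inv_set[OF Gperm[OF \<tau>G[OF c]] _ Uk] by auto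
  qed
  have invA: "\<tau> a z \<in> U \<longleftrightarrow> z \<in> U" for z
  proof (rule inv[OF ab(1)])
    show "\<beta> M \<in> U" using V0U by (auto simp: V0_def)
    have "\<epsilon> a (\<beta> M) = \<beta> M" using P by (auto simp: \<epsilon>_def \<beta>M transpose_def)
    moreover have "\<beta> M \<notin> {N..N + P - 1}" unfolding \<beta>M using P M(1) by auto
    hence "\<kappa>a (\<beta> M) = \<beta> M" by (rule permutes_not_in[OF \<kappa>aperm])
    moreover have "\<rho> a (\<beta> M) = \<beta> M" using \<rho>big[OF ab(1)] P by (auto simp: \<beta>M)
    ultimately show "\<tau> a (\<beta> M) \<in> U" using \<tau>a \<open>\<beta> M \<in> U\<close> by simp
  qed
  have invB: "\<tau> b z \<in> U \<longleftrightarrow> z \<in> U" for z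
  proof (rule inv[OF ab(2)])
    show "\<alpha> M \<in> U" using V0U by (auto simp: V0_def)
    have "\<epsilon> b (\<alpha> M) = \<alpha> M" by (auto simp: \<epsilon>_def \<alpha>M transpose_def)
    moreover have "\<alpha> M \<notin> insert (N + 1) {N + P..N + 2 * P - 2}" unfolding \<alpha>M using P M(1) by auto
    hence "\<kappa>b (\<alpha> M) = \<alpha> M" by (rule permutes_not_in[OF \<kappa>bperm])
    moreover have "\<rho> b (\<alpha> M) = \<alpha> M" using \<rho>big[OF ab(2)] M by (auto simp: \<alpha>M)
    ultimately show "\<tau> b (\<alpha> M) \<in> U" using \<tau>b \<open>\<alpha> M \<in> U\<close> by simp
  qed
  have xU: "x \<in> U" using V0U by (auto simp: V0_def)
  have invC: "\<tau> c z \<in> U \<longleftrightarrow> z \<in> U" if c: "c \<in> B" for c z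
  proof -
    consider "c = a" | "c = b" | "c \<noteq> a" "c \<noteq> b" by blast
    thus ?thesis
    proof cases
      case 1 thus ?thesis using invA by simp
    next
      case 2 thus ?thesis using invB by simp
    next
      case 3
      show ?thesis
      proof (rule inv[OF c xU])
        have "\<epsilon> c x = x" using 3 P by (auto simp: \<epsilon>_def x_def transpose_def)
        moreover have "\<rho> c x = x" using \<rho>big[OF c] by (simp add: x_def)
        ultimately show "\<tau> c x \<in> U" using \<tau>c[OF 3] xU by simp
      qed
    qed
  qed
  have AU: "\<alpha> i \<in> U" if "i < P" for i
    using that
  proof (induct i)
    case 0 thus ?case using xU P by (simp add: x_def \<alpha>_def)
  next
    case (Suc i)
    have "\<kappa>a (\<alpha> i) = \<alpha> (Suc i)"
      using cycle_rot_apply[OF distA, of i 1] Suc(2) lenA by (simp add: \<kappa>a_def nthA)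
    moreover have "\<epsilon> a (\<alpha> i) = \<alpha> i" using Suc(2) P ab(3)
      by (auto simp: \<epsilon>_def \<alpha>_def transpose_def)
    moreover have "\<rho> a (\<alpha> (Suc i)) = \<alpha> (Suc i)"
      using \<rho>N[OF ab(1) ab(3)] by (auto simp: \<alpha>_def)
    ultimately have e: "\<tau> a (\<alpha> i) = \<alpha> (Suc i)" using \<tau>a by simp
    have "\<alpha> i \<in> U" using Suc.hyps Suc.prems by simp
    thus ?case using invA[of "\<alpha> i"] e by simp
  qed
  have BU: "\<beta> i \<in> U" if "i < P" for i
    using that
  proof (induct i)
    case 0 thus ?case using xU by (simp add: x_def \<beta>_def)
  next
    case (Suc i)
    have "\<kappa>b (\<beta> i) = \<beta> (Suc i)"
      using cycle_rot_apply[OF distB, of i 1] Suc(2) lenB by (simp add: \<kappa>b_def nthB)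
    moreover have "\<epsilon> b (\<beta> i) = \<beta> i" using Suc(2) P
      by (auto simp: \<epsilon>_def \<beta>_def transpose_def)
    moreover have "\<rho> b (\<beta> (Suc i)) = \<beta> (Suc i)"
      using \<rho>big[OF ab(2)] P by (auto simp: \<beta>_def)
    ultimately have e: "\<tau> b (\<beta> i) = \<beta> (Suc i)" using \<tau>b by simp
    have "\<beta> i \<in> U" using Suc.hyps Suc.prems by simp
    thus ?case using invB[of "\<beta> i"] e by simp
  qed
  have NU: "N \<in> U" using AU[of "P - 1"] P by (simp add: \<alpha>_def)
  have qU: "q \<in> U"
  proof -
    have "q \<le> m" using q by auto
    hence "\<tau> b q = N" using \<tau>b \<epsilon>small \<kappa>bsmall \<rho>q by (simp add: N_def)
    thus ?thesis using invB[of q] NU by simp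
  qed
  have mU: "{1..m} \<subseteq> U"
  proof (rule conn[OF qU])
    fix c i assume "c \<in> B" "i \<in> D c"
    thus "i \<in> U \<longleftrightarrow> \<pi> c i \<in> U" using invC \<tau>D by metis
  qed
  have "{1..k} \<subseteq> U"
  proof
    fix z assume z: "z \<in> {1..k}"
    consider "z \<le> m" | "z = N" | "N + 1 \<le> z" "z \<le> N + P - 1" | "N + P \<le> z" by (force simp: N_def)
    thus "z \<in> U"
    proof cases
      case 1 thus ?thesis using mU z by auto
    next
      case 2 thus ?thesis using NU by simp
    next
      case 3
      hence "z = \<alpha> (z - N - 1)" "z - N - 1 < P" using P by (auto simp: \<alpha>_def)
      thus ?thesis using AU by metis
    next
      case 4
      hence "z = \<beta> (z - N - P + 1)" "z - N - P + 1 < P" using P z by (auto simp: \<beta>_def k_def)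
      thus ?thesis using BU by metis
    qed
  qed
  hence "U = {1..k}" using Uk by auto
  hence "all3 G {1..k}" using UA by simp
  hence "generate (alt_group k) (\<tau> ` B) = carrier (alt_group k)"
    using alt_from_all3[OF TB] by (simp add: G_def)
  thus ?thesis using \<tau>alt \<tau>D by blast
qed

theorem theoremA:
  fixes F :: "('a, 'b) monoid_scheme" and B :: "'a set" and S :: "'a set" and H :: "'a set"
    and \<gamma> :: "nat \<Rightarrow> 'a" and n :: nat
  assumes "group F"
    and "free_basis F B"
    and "\<exists>x\<in>B. \<exists>y\<in>B. x \<noteq> y"
    and "finite S" and "S \<subseteq> carrier F" and "H = generate F S"
    and "infinite (rcosets\<^bsub>F\<^esub> H)"
    and "\<forall>i\<in>{1..n}. \<gamma> i \<in> carrier F - H"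
  shows "\<exists>k f. f \<in> epi F (alt_group k) \<and> (\<forall>i\<in>{1..n}. f (\<gamma> i) \<notin> f ` H)"
proof -
  interpret F: group F by fact
  have BF: "B \<subseteq> carrier F" and genB: "generate F B = carrier F"
    using assms(2) by (auto simp: free_basis_def)
  have Hsub: "subgroup H F" using F.generate_is_subgroup[OF assms(5)] assms(6) by simp
  have HF: "H \<subseteq> carrier F" using subgroup.subset[OF Hsub] .
  define word where "word g = (SOME w. set (map fst w) \<subseteq> B \<and> word_eval F w = g)" for g
  have word: "set (map fst (word g)) \<subseteq> B \<and> word_eval F (word g) = g" if "g \<in> carrier F" for g
  proof -
    have "\<exists>w. set (map fst w) \<subseteq> B \<and> word_eval F w = g"
      using F.generate_words[of g B] genB that BF by auto
    thus ?thesis unfolding word_def by (rule someI_ex)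
  qed
  have \<gamma>F: "\<gamma> i \<in> carrier F" "\<gamma> i \<notin> H" if "i \<in> {1..n}" for i using assms(8) that by auto
  define R where "R = word ` (S \<union> \<gamma> ` {1..n})"
  have Rfin: "finite R" using assms(4) by (simp add: R_def)
  have RB: "set (map fst r) \<subseteq> B" if rR: "r \<in> R" for r
  proof -
    obtain g where g: "g \<in> S \<union> \<gamma> ` {1..n}" "r = word g" using rR unfolding R_def by blast
    have "g \<in> carrier F" using g(1) assms(5) \<gamma>F by auto
    thus ?thesis using word g(2) by blast
  qed
  have evalF: "word_eval F v \<in> carrier F" if "set (map fst v) \<subseteq> B" for v
    using F.word_eval_carrier that BF by auto
  define pt where "pt g = H #>\<^bsub>F\<^esub> inv\<^bsub>F\<^esub> g" for g
  have pt1: "pt \<one>\<^bsub>F\<^esub> = H" using HF by (simp add: pt_def)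
  have ptmult: "pt (c \<otimes>\<^bsub>F\<^esub> g) = pt g #>\<^bsub>F\<^esub> inv\<^bsub>F\<^esub> c" if "c \<in> carrier F" "g \<in> carrier F" for c g
    using that HF by (simp add: pt_def F.inv_mult_group F.coset_mult_assoc)
  have ptrc: "pt g \<in> rcosets\<^bsub>F\<^esub> H" if "g \<in> carrier F" for g
    using that HF by (simp add: pt_def F.rcosetsI)
  define Y where "Y = insert H (\<Union>r\<in>R. (\<lambda>j. pt (word_eval F (drop j r))) ` {0..length r})"
  have finY: "finite Y" using Rfin by (simp add: Y_def)
  have ptY: "pt (word_eval F (drop j r)) \<in> Y" if rR: "r \<in> R" for r j
  proof (cases "j \<le> length r")
    case True
    hence "pt (word_eval F (drop j r)) \<in> (\<lambda>j. pt (word_eval F (drop j r))) ` {0..length r}" by auto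
    thus ?thesis using rR unfolding Y_def by blast
  next
    case False thus ?thesis using pt1 by (simp add: Y_def)
  qed
  have Yrc: "Y \<subseteq> rcosets\<^bsub>F\<^esub> H"
  proof -
    have "H \<in> rcosets\<^bsub>F\<^esub> H" using ptrc[of "\<one>\<^bsub>F\<^esub>"] pt1 by simp
    moreover have "pt (word_eval F (drop j r)) \<in> rcosets\<^bsub>F\<^esub> H" if "r \<in> R" for r j
      using ptrc evalF RB[OF that] by (metis (no_types, lifting) set_drop_subset set_map subset_trans
          map_map[symmetric] drop_map)
    ultimately show ?thesis by (auto simp: Y_def)
  qed
  have Ycar: "P \<subseteq> carrier F" if PY: "P \<in> Y" for P
  proof -
    obtain g where "g \<in> carrier F" "P = H #>\<^bsub>F\<^esub> g" using Yrc PY by (auto simp: RCOSETS_def)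
    thus ?thesis using F.r_coset_subset_G[OF HF] by simp
  qed
  have cosinj: "P = P'" if "P \<in> Y" "P' \<in> Y" "P #>\<^bsub>F\<^esub> inv\<^bsub>F\<^esub> c = P' #>\<^bsub>F\<^esub> inv\<^bsub>F\<^esub> c" "c \<in> carrier F" for P P' c
  proof -
    have "(P #>\<^bsub>F\<^esub> inv\<^bsub>F\<^esub> c) #>\<^bsub>F\<^esub> c = (P' #>\<^bsub>F\<^esub> inv\<^bsub>F\<^esub> c) #>\<^bsub>F\<^esub> c" using that by simp
    thus ?thesis using Ycar[OF that(1)] Ycar[OF that(2)] that(4) by (simp add: F.coset_mult_assoc)
  qed
  have slot: "\<exists>b\<in>B. \<exists>Q\<in>Y. Q #>\<^bsub>F\<^esub> inv\<^bsub>F\<^esub> b \<notin> Y"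
  proof (rule ccontr)
    assume "\<not> ?thesis"
    hence cl: "Q #>\<^bsub>F\<^esub> inv\<^bsub>F\<^esub> c \<in> Y" if "c \<in> B" "Q \<in> Y" for c Q using that by blast
    have cl2: "Q #>\<^bsub>F\<^esub> c \<in> Y" if c: "c \<in> B" and Q: "Q \<in> Y" for c Q
    proof -
      have cF: "c \<in> carrier F" using c BF by auto
      have "(\<lambda>Q. Q #>\<^bsub>F\<^esub> inv\<^bsub>F\<^esub> c) ` Y = Y"
        using finY cl[OF c] cosinj[OF _ _ _ cF] by (intro endo_inj_surj) (auto simp: inj_on_def)
      then obtain Q' where Q': "Q' \<in> Y" "Q = Q' #>\<^bsub>F\<^esub> inv\<^bsub>F\<^esub> c" using Q by (metis imageE)
      have "Q #>\<^bsub>F\<^esub> c = Q'" using Q' Ycar[OF Q'(1)] cF by (simp add: F.coset_mult_assoc)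
      thus ?thesis using Q' by simp
    qed
    have gen: "\<forall>Q\<in>Y. Q #>\<^bsub>F\<^esub> g \<in> Y" if "g \<in> generate F B" for g
      using that
    proof induct
      case one thus ?case using Ycar by simp
    next
      case (incl h) thus ?case using cl2 by auto
    next
      case (inv h) thus ?case using cl by auto
    next
      case (eng g1 g2)
      have "g1 \<in> carrier F" "g2 \<in> carrier F" using eng(1,3) F.generate_in_carrier[OF BF] by auto
      thus ?case using eng Ycar by (simp add: F.coset_mult_assoc[symmetric])
    qed
    have "rcosets\<^bsub>F\<^esub> H \<subseteq> Y"
    proof
      fix P assume "P \<in> rcosets\<^bsub>F\<^esub> H"
      then obtain g where g: "g \<in> carrier F" "P = H #>\<^bsub>F\<^esub> g" by (auto simp: RCOSETS_def)
      thus "P \<in> Y" using gen[of g] genB by (auto simp: Y_def)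
    qed
    thus False using finY assms(7) finite_subset by blast
  qed
  then obtain b Q where b: "b \<in> B" and Q: "Q \<in> Y" "Q #>\<^bsub>F\<^esub> inv\<^bsub>F\<^esub> b \<notin> Y" by blast
  have "\<exists>a. a \<in> B \<and> a \<noteq> b"
  proof -
    obtain x y where xy: "x \<in> B" "y \<in> B" "x \<noteq> y" using assms(3) by blast
    show ?thesis
    proof (cases "x = b")
      case True thus ?thesis using xy by (intro exI[of _ y]) auto
    next
      case False thus ?thesis using xy by (intro exI[of _ x]) auto
    qed
  qed
  then obtain a where a: "a \<in> B" "a \<noteq> b" by blast
  define m where "m = card Y"
  have cY: "card Y = card {1..m}" by (simp add: m_def)
  obtain e where e: "bij_betw e Y {1..m}"
    using finite_same_card_bij[OF finY finite_atLeastAtMost cY] by blast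
  have einj: "inj_on e Y" and eY: "e ` Y = {1..m}" using e by (auto simp: bij_betw_def)
  define ie where "ie = inv_into Y e"
  have iee: "ie (e P) = P" if "P \<in> Y" for P using einj that by (simp add: ie_def)
  define D where "D c = e ` {P \<in> Y. P #>\<^bsub>F\<^esub> inv\<^bsub>F\<^esub> c \<in> Y}" for c
  define \<pi> where "\<pi> c i = e (ie i #>\<^bsub>F\<^esub> inv\<^bsub>F\<^esub> c)" for c i
  have \<pi>e: "\<pi> c (e P) = e (P #>\<^bsub>F\<^esub> inv\<^bsub>F\<^esub> c)" if "P \<in> Y" for c P using iee[OF that] by (simp add: \<pi>_def)
  have eD: "e P \<in> D c" if "P \<in> Y" "P #>\<^bsub>F\<^esub> inv\<^bsub>F\<^esub> c \<in> Y" for P c using that by (auto simp: D_def)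
  define q where "q = e Q"
  have qm: "q \<in> {1..m}" using eY Q by (auto simp: q_def)
  have qD: "q \<notin> D b"
  proof
    assume "q \<in> D b"
    then obtain P where P: "P \<in> Y" "P #>\<^bsub>F\<^esub> inv\<^bsub>F\<^esub> b \<in> Y" "e P = e Q" by (auto simp: D_def q_def)
    hence "P = Q" using inj_onD[OF einj P(3) P(1) Q(1)] by simp
    thus False using P Q by simp
  qed
  have conn: "{1..m} \<subseteq> U"
    if qU: "q \<in> U" and inv: "\<And>c i. c \<in> B \<Longrightarrow> i \<in> D c \<Longrightarrow> (i \<in> U \<longleftrightarrow> \<pi> c i \<in> U)" for U
  proof -
    have edge: "e P \<in> U \<longleftrightarrow> e (P #>\<^bsub>F\<^esub> inv\<^bsub>F\<^esub> c) \<in> U"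
      if "c \<in> B" "P \<in> Y" "P #>\<^bsub>F\<^esub> inv\<^bsub>F\<^esub> c \<in> Y" for c P
      using inv[OF that(1) eD[OF that(2,3)]] \<pi>e[OF that(2)] by simp
    have path: "e (pt (word_eval F v)) \<in> U \<longleftrightarrow> e H \<in> U"
      if r: "r \<in> R" and ex: "\<exists>j. drop j r = v" for r v
      using ex
    proof (induct v)
      case Nil thus ?case using pt1 by simp
    next
      case (Cons l v')
      obtain c bb where l: "l = (c, bb)" by (cases l)
      obtain j where j: "drop j r = l # v'" using Cons(2) by blast
      have j': "drop (Suc j) r = v'" using j by (metis drop_Suc list.sel(3) tl_drop)
      have cB: "c \<in> B" using j l RB[OF r] set_drop_subset[of j r] by (auto simp: image_subset_iff)
      have cF: "c \<in> carrier F" using cB BF by auto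
      have v'B: "set (map fst v') \<subseteq> B" using j' RB[OF r] set_drop_subset[of "Suc j" r] by auto
      define g' where "g' = word_eval F v'"
      have g'F: "g' \<in> carrier F" using evalF[OF v'B] by (simp add: g'_def)
      have IH: "e (pt g') \<in> U \<longleftrightarrow> e H \<in> U" using Cons(1) j' by (auto simp: g'_def)
      have Y1: "pt g' \<in> Y" using ptY[OF r, of "Suc j"] j' by (simp add: g'_def)
      have Y2: "pt (word_eval F (l # v')) \<in> Y" using ptY[OF r, of j] j by simp
      show ?case
      proof (cases bb)
        case False
        have "pt (word_eval F (l # v')) = pt g' #>\<^bsub>F\<^esub> inv\<^bsub>F\<^esub> c"
          using l False ptmult[OF cF g'F] by (simp add: g'_def)
        thus ?thesis using edge[OF cB Y1] Y2 IH by simp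
      next
        case True
        have eq: "pt (word_eval F (l # v')) = pt g' #>\<^bsub>F\<^esub> c"
          using l True ptmult[OF F.inv_closed[OF cF] g'F] F.inv_inv[OF cF] by (simp add: g'_def)
        have "pt (word_eval F (l # v')) #>\<^bsub>F\<^esub> inv\<^bsub>F\<^esub> c = pt g'"
          unfolding eq using Ycar[OF Y1] cF by (simp add: F.coset_mult_assoc)
        thus ?thesis using edge[OF cB Y2] Y1 IH by simp
      qed
    qed
    have HU: "e H \<in> U"
    proof -
      have "Q = H \<or> (\<exists>r\<in>R. \<exists>j. Q = pt (word_eval F (drop j r)))" using Q(1) by (auto simp: Y_def)
      thus ?thesis using qU path by (auto simp: q_def)
    qed
    have "e P \<in> U" if "P \<in> Y" for P
    proof -
      have "P = H \<or> (\<exists>r\<in>R. \<exists>j. P = pt (word_eval F (drop j r)))" using that by (auto simp: Y_def)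
      thus ?thesis using HU path by auto
    qed
    hence "e ` Y \<subseteq> U" by blast
    thus ?thesis using eY by simp
  qed
  have Dsub: "D c \<subseteq> {1..m}" for c using eY by (auto simp: D_def)
  have Dimg: "\<pi> c ` D c \<subseteq> {1..m}" for c using eY \<pi>e by (auto simp: D_def)
  have Dinj: "inj_on (\<pi> c) (D c)" if "c \<in> B" for c
  proof (rule inj_onI)
    fix i i' assume "i \<in> D c" "i' \<in> D c" "\<pi> c i = \<pi> c i'"
    then obtain P P' where P: "P \<in> Y" "P #>\<^bsub>F\<^esub> inv\<^bsub>F\<^esub> c \<in> Y" "i = e P"
      and P': "P' \<in> Y" "P' #>\<^bsub>F\<^esub> inv\<^bsub>F\<^esub> c \<in> Y" "i' = e P'"
      and eq: "\<pi> c i = \<pi> c i'" by (auto simp: D_def)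
    have "e (P #>\<^bsub>F\<^esub> inv\<^bsub>F\<^esub> c) = e (P' #>\<^bsub>F\<^esub> inv\<^bsub>F\<^esub> c)" using eq P P' \<pi>e by simp
    hence "P #>\<^bsub>F\<^esub> inv\<^bsub>F\<^esub> c = P' #>\<^bsub>F\<^esub> inv\<^bsub>F\<^esub> c" using einj P P' by (auto dest: inj_onD)
    moreover have "c \<in> carrier F" using that BF by auto
    ultimately have "P = P'" using cosinj[OF P(1) P'(1)] by blast
    thus "i = i'" using P P' by simp
  qed
  obtain k \<tau> where \<tau>alt: "\<And>c. c \<in> B \<Longrightarrow> \<tau> c \<in> carrier (alt_group k)"
    and \<tau>D: "\<And>c i. c \<in> B \<Longrightarrow> i \<in> D c \<Longrightarrow> \<tau> c i = \<pi> c i"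
    and \<tau>gen: "generate (alt_group k) (\<tau> ` B) = carrier (alt_group k)"
    using core[of B D m \<pi> a b q, OF Dsub Dimg Dinj a(1) b a(2) qm qD conn] by metis
  interpret K: group "alt_group k" by (rule alt_group_is_group)
  have phi: "\<tau> ` B \<subseteq> carrier (alt_group k)" using \<tau>alt by auto
  define f where "f = ext_hom F B (alt_group k) \<tau>"
  have fhom: "f \<in> hom F (alt_group k)" unfolding f_def by (rule ext_hom_hom[OF assms(1) K.is_group assms(2) phi])
  interpret fh: group_hom F "alt_group k" f
    unfolding group_hom_def group_hom_axioms_def using fhom assms(1) K.is_group by auto
  have fw: "f (word_eval F w) = word_eval (alt_group k) (mapw \<tau> w)" if "set (map fst w) \<subseteq> B" for w
    unfolding f_def by (rule ext_hom_word[OF assms(1) K.is_group assms(2) phi that])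
  have fB: "f c = \<tau> c" if "c \<in> B" for c
  proof -
    have "f (word_eval F [(c, False)]) = word_eval (alt_group k) [(\<tau> c, False)]"
      using fw[of "[(c, False)]"] that by simp
    moreover have "c \<otimes>\<^bsub>F\<^esub> \<one>\<^bsub>F\<^esub> = c" using that BF by auto
    ultimately show ?thesis using that \<tau>alt by simp
  qed
  have epi: "f \<in> epi F (alt_group k)"
  proof -
    have "f ` carrier F = f ` generate F B" using genB by simp
    also have "\<dots> = generate (alt_group k) (f ` B)" using fh.generate_img[OF BF] by simp
    also have "f ` B = \<tau> ` B" using fB by auto
    finally show ?thesis using \<tau>gen fhom by (simp add: epi_def)
  qed
  have Kmult: "x \<otimes>\<^bsub>alt_group k\<^esub> y = x \<circ> y" for x y by (simp add: alt_group_mult)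
  have fpath: "word_eval (alt_group k) (mapw \<tau> v) (e H) = e (pt (word_eval F v))"
    if r: "r \<in> R" and "\<exists>j. drop j r = v" for r v
    using that(2)
  proof (induct v)
    case Nil thus ?case using pt1 by (simp add: alt_group_one)
  next
    case (Cons l v')
    obtain c bb where l: "l = (c, bb)" by (cases l)
    obtain j where j: "drop j r = l # v'" using Cons(2) by blast
    have j': "drop (Suc j) r = v'" using j by (metis drop_Suc list.sel(3) tl_drop)
    have cB: "c \<in> B" using j l RB[OF r] set_drop_subset[of j r] by (auto simp: image_subset_iff)
    have cF: "c \<in> carrier F" using cB BF by auto
    have v'B: "set (map fst v') \<subseteq> B" using j' RB[OF r] set_drop_subset[of "Suc j" r] by auto
    define g' where "g' = word_eval F v'"
    have g'F: "g' \<in> carrier F" using evalF[OF v'B] by (simp add: g'_def)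
    have IH: "word_eval (alt_group k) (mapw \<tau> v') (e H) = e (pt g')" using Cons(1) j' by (auto simp: g'_def)
    have Y1: "pt g' \<in> Y" using ptY[OF r, of "Suc j"] j' by (simp add: g'_def)
    have Y2: "pt (word_eval F (l # v')) \<in> Y" using ptY[OF r, of j] j by simp
    have tc: "\<tau> c \<in> carrier (alt_group k)" using \<tau>alt[OF cB] .
    show ?case
    proof (cases bb)
      case False
      have eq: "pt (word_eval F (l # v')) = pt g' #>\<^bsub>F\<^esub> inv\<^bsub>F\<^esub> c"
        using l False ptmult[OF cF g'F] by (simp add: g'_def)
      have "\<tau> c (e (pt g')) = e (pt g' #>\<^bsub>F\<^esub> inv\<^bsub>F\<^esub> c)"
        using \<tau>D[OF cB eD[OF Y1]] \<pi>e[OF Y1] Y2 eq by simp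
      thus ?thesis using l False IH eq by (simp add: Kmult)
    next
      case True
      have eq: "pt (word_eval F (l # v')) = pt g' #>\<^bsub>F\<^esub> c"
        using l True ptmult[OF F.inv_closed[OF cF] g'F] F.inv_inv[OF cF] by (simp add: g'_def)
      have eq2: "pt (word_eval F (l # v')) #>\<^bsub>F\<^esub> inv\<^bsub>F\<^esub> c = pt g'"
        unfolding eq using Ycar[OF Y1] cF by (simp add: F.coset_mult_assoc)
      have "\<tau> c (e (pt (word_eval F (l # v')))) = e (pt g')"
        using \<tau>D[OF cB eD[OF Y2]] \<pi>e[OF Y2] Y1 eq2 by simp
      moreover have "bij (\<tau> c)" using tc by (auto simp: alt_group_carrier permutes_bij)
      ultimately have "inv' (\<tau> c) (e (pt g')) = e (pt (word_eval F (l # v')))"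
        by (metis bij_inv_eq_iff)
      thus ?thesis using l True IH alt_group_inv_equality[OF tc] by (simp add: Kmult)
    qed
  qed
  have fpt: "f g (e H) = e (pt g)" if "g \<in> S \<union> \<gamma> ` {1..n}" for g
  proof -
    have gF: "g \<in> carrier F" using that assms(5) \<gamma>F by auto
    have wR: "word g \<in> R" using that by (simp add: R_def)
    have "f g = f (word_eval F (word g))" using word[OF gF] by simp
    also have "\<dots> = word_eval (alt_group k) (mapw \<tau> (word g))" by (rule fw) (use word[OF gF] in blast)
    finally show ?thesis using fpath[OF wR, of "word g"] word[OF gF] by (metis drop0)
  qed
  have fix_H0: "f g (e H) = e H" if "g \<in> generate F S" for g
    using that
  proof induct
    case one thus ?case by (simp add: alt_group_one)
  next
    case (incl s)
    have "s \<in> H" using incl assms(6) by (auto intro: generate.incl)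
    hence "pt s = H" unfolding pt_def
      using F.coset_join2[OF F.inv_closed Hsub] subgroup.m_inv_closed[OF Hsub] assms(5) incl by auto
    thus ?case using fpt incl by auto
  next
    case (inv s)
    have sF: "s \<in> carrier F" using inv assms(5) by auto
    have fs: "f s \<in> carrier (alt_group k)" using fhom sF by (auto simp: hom_def)
    have "f s (e H) = e H"
    proof -
      have "s \<in> H" using inv assms(6) by (auto intro: generate.incl)
      hence "pt s = H" unfolding pt_def
        using F.coset_join2[OF F.inv_closed Hsub] subgroup.m_inv_closed[OF Hsub] sF by auto
      thus ?thesis using fpt inv by auto
    qed
    moreover have "bij (f s)" using fs by (auto simp: alt_group_carrier permutes_bij)
    ultimately have "inv' (f s) (e H) = e H" by (metis bij_inv_eq_iff)
    thus ?case using fh.hom_inv[OF sF] alt_group_inv_equality[OF fs] by simp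
  next
    case (eng g1 g2)
    have "g1 \<in> carrier F" "g2 \<in> carrier F" using eng(1,3) F.generate_in_carrier[OF assms(5)] by auto
    thus ?case using eng by (simp add: Kmult)
  qed
  have fix_H: "f g (e H) = e H" if "g \<in> H" for g using fix_H0 that assms(6) by blast
  have "f (\<gamma> i) \<notin> f ` H" if i: "i \<in> {1..n}" for i
  proof
    assume "f (\<gamma> i) \<in> f ` H"
    then obtain g where g: "g \<in> H" "f (\<gamma> i) = f g" by blast
    have "e (pt (\<gamma> i)) = e H" using fpt[of "\<gamma> i"] i fix_H[OF g(1)] g(2) by simp
    moreover have "pt (\<gamma> i) \<in> Y"
    proof -
      have wR: "word (\<gamma> i) \<in> R" using i by (simp add: R_def)
      show ?thesis using ptY[OF wR, of 0] word[OF \<gamma>F(1)[OF i]] by simp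
    qed
    moreover have "H \<in> Y" by (simp add: Y_def)
    ultimately have eq: "pt (\<gamma> i) = H" using einj by (auto dest: inj_onD)
    have "inv\<^bsub>F\<^esub> \<gamma> i \<in> H"
    proof -
      have "\<one>\<^bsub>F\<^esub> \<otimes>\<^bsub>F\<^esub> inv\<^bsub>F\<^esub> \<gamma> i \<in> H #>\<^bsub>F\<^esub> inv\<^bsub>F\<^esub> \<gamma> i"
        using F.rcosI[OF subgroup.one_closed[OF Hsub] HF F.inv_closed[OF \<gamma>F(1)[OF i]]] .
      thus ?thesis using eq \<gamma>F(1)[OF i] by (simp add: pt_def)
    qed
    hence "\<gamma> i \<in> H" using subgroup.m_inv_closed[OF Hsub] \<gamma>F(1)[OF i] by fastforce
    thus False using \<gamma>F(2)[OF i] by simp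
  qed
  thus ?thesis using epi by blast
qed

end
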